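(* Let $n$ be a positive integer and let $\lambda=(\lambda_1\ge\lambda_2\ge\cdots)$ be an integer partition. Then $c_n(c_n(\lambda))=\lambda$ if and only if for every integer $k\ge 0$ there is at most one index $i$ with $kn<\lambda_i<(k+1)n$.
   Context: For a partition $\lambda$, let $\lambda'_j=\#\{t:\lambda_t\ge j\}$ be the length of the $j$-th column of its Young shape ($j\ge1$). For a positive integer $n$, $c_n(\lambda)$ is the partition $\mu=(\mu_1,\mu_2,\dots,\mu_k)$ (of the same size as $\lambda$, zero parts omitted) with $\mu_i=\sum_{j=(i-1)n+1}^{in}\lambda'_j$, i.e. $\mu_i$ is the total number of cells in columns $(i-1)n+1,\dots,in$ of $\lambda$. For example $c_3((7,6,6,6,4,3,3,1))=(22,13,1)$, and $c_1$ is conjugation. *)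

theory Defs
  imports Main
begin

definition is_partition :: "nat list \<Rightarrow> bool" where
  "is_partition lam \<longleftrightarrow> sorted_wrt (\<ge>) lam \<and> 0 \<notin> set lam"

text \<open>Length of the j-th column (j \<ge> 1) of the Young shape: number of parts \<ge> j.\<close>
definition col :: "nat list \<Rightarrow> nat \<Rightarrow> nat" where
  "col lam j = length (filter (\<lambda>t. j \<le> t) lam)"

text \<open>c_n(lam): the i-th part (i = 1,2,...) is the total number of cells in columns
  (i-1)n+1, ..., in of lam; zero parts omitted. Blocks are indexed from 0 here, and
  blocks with index \<ge> the largest part are empty (for n \<ge> 1).\<close>
definition cn :: "nat \<Rightarrow> nat list \<Rightarrow> nat list" where
  "cn n lam = filter (\<lambda>x. x \<noteq> 0)
     (map (\<lambda>i. \<Sum>j\<in>{i*n+1..(i+1)*n}. col lam j) [0..<Max (insert 0 (set lam))])"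

end

theory Submission
  imports Defs
begin

definition F :: "nat \<Rightarrow> nat list \<Rightarrow> nat \<Rightarrow> nat" where
  "F n lam i = (\<Sum>t<length lam. min n (lam!t - i*n))"

lemma col_sum: "col lam j = (\<Sum>t<length lam. if j \<le> lam!t then 1 else 0)"
proof -
  have "col lam j = sum_list (map (\<lambda>t. if j \<le> t then 1 else 0) lam)"
    unfolding col_def by (induction lam) auto
  then show ?thesis by (simp add: sum_list_sum_nth atLeast0LessThan)
qed

lemma block_one: "(\<Sum>j\<in>{i*n+1..(i+1)*n}. (if j \<le> x then 1 else 0::nat)) = min n (x - i*n)"
proof -
  have "(\<Sum>j\<in>{i*n+1..(i+1)*n}. (if j \<le> x then 1 else 0::nat)) = card {j\<in>{i*n+1..(i+1)*n}. j \<le> x}"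
    by (simp add: sum.inter_filter[symmetric])
  also have "{j\<in>{i*n+1..(i+1)*n}. j \<le> x} = {i*n+1..min ((i+1)*n) x}" by auto
  also have "card \<dots> = min n (x - i*n)" by simp
  finally show ?thesis .
qed

lemma block: "(\<Sum>j\<in>{i*n+1..(i+1)*n}. col lam j) = F n lam i"
  unfolding F_def col_sum
  by (subst sum.swap) (rule sum.cong[OF refl], rule block_one)

lemma cn_F: "cn n lam = filter (\<lambda>x. x \<noteq> 0) (map (F n lam) [0..<Max (insert 0 (set lam))])"
  unfolding cn_def using block[where n=n and lam=lam] by (simp del: Suc_eq_plus1)

lemma F_zero: assumes "n > 0" "Max (insert 0 (set lam)) \<le> j" shows "F n lam j = 0"
proof -
  have "\<forall>t<length lam. lam!t \<le> j*n"
  proof (intro allI impI)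
    fix t assume "t < length lam"
    then have "lam!t \<le> Max (insert 0 (set lam))" by (simp add: nth_mem)
    also have "\<dots> \<le> j" by fact
    also have "j \<le> j*n" using assms by simp
    finally show "lam!t \<le> j*n" .
  qed
  then show ?thesis unfolding F_def by simp
qed

lemma cn_eq: assumes "n > 0" "\<forall>j<K. F n lam j \<noteq> 0" "\<forall>j\<ge>K. F n lam j = 0"
  shows "cn n lam = map (F n lam) [0..<K]"
proof -
  let ?M = "Max (insert 0 (set lam))"
  have "K \<le> ?M" using assms F_zero[of n lam ?M] by (meson not_le order_refl)
  then have "[0..<?M] = [0..<K] @ [K..<?M]"
    by (metis le_add_diff_inverse upt_add_eq_append zero_le)
  then show ?thesis using assms unfolding cn_F by auto
qed

lemma minlem: fixes x i n :: nat assumes "n > 0"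
  shows "min n (x - i*n) = (if i < x div n then n else 0) + (if x div n = i then x mod n else 0)"
proof -
  have x: "x = x div n * n + x mod n" by (metis div_mult_mod_eq)
  have "x mod n < n" using assms by simp
  consider "i < x div n" | "i = x div n" | "x div n < i" by linarith
  then show ?thesis
  proof cases
    case 1
    then have "(i+1)*n \<le> x div n * n" using mult_le_mono1 by (metis Suc_eq_plus1 Suc_leI)
    moreover have "x div n * n \<le> x" by simp
    ultimately have "(i+1)*n \<le> x" by linarith
    then have "n \<le> x - i*n" by (simp add: algebra_simps)
    then show ?thesis using 1 by simp
  next
    case 2
    then have "x - i*n = x mod n" using x by (metis add_diff_cancel_left')
    then show ?thesis using 2 \<open>x mod n < n\<close> by simp
  next
    case 3
    then have "(x div n + 1)*n \<le> i * n" using mult_le_mono1 by (metis Suc_eq_plus1 Suc_leI)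
    then have "x div n * n + n \<le> i * n" by simp
    then have "x \<le> i*n" using x \<open>x mod n < n\<close> by linarith
    then show ?thesis using 3 by auto
  qed
qed

lemma interval_iff: fixes x k n :: nat assumes "n > 0"
  shows "(k*n < x \<and> x < (k+1)*n) \<longleftrightarrow> (x div n = k \<and> x mod n \<noteq> 0)"
proof -
  have x: "x = x div n * n + x mod n" by (metis div_mult_mod_eq)
  have m: "x mod n < n" using assms by simp
  show ?thesis
  proof
    assume h: "k*n < x \<and> x < (k+1)*n"
    have "x div n = k" by (rule div_nat_eqI) (use h in \<open>auto simp: mult.commute\<close>)
    moreover have "x mod n \<noteq> 0"
    proof
      assume "x mod n = 0"
      then have "x = k*n" using x \<open>x div n = k\<close> by simp
      then show False using h by simp
    qed
    ultimately show "x div n = k \<and> x mod n \<noteq> 0" by simp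
  next
    assume h: "x div n = k \<and> x mod n \<noteq> 0"
    then have "x = k*n + x mod n" using x by simp
    then show "k*n < x \<and> x < (k+1)*n" using m h by simp
  qed
qed


lemma ceil_iff: fixes x i n :: nat assumes "n > 0"
  shows "i < (x + n - 1) div n \<longleftrightarrow> i*n < x"
proof -
  have "i < (x + n - 1) div n \<longleftrightarrow> Suc i \<le> (x + n - 1) div n" by (rule Suc_le_eq[symmetric])
  also have "\<dots> \<longleftrightarrow> Suc i * n \<le> x + n - 1" using assms by (rule less_eq_div_iff_mult_less_eq)
  also have "\<dots> \<longleftrightarrow> i*n < x" using assms by auto
  finally show ?thesis .
qed

lemma witness: assumes "n > 0" "F n lam i mod n \<noteq> 0"
  shows "\<exists>t<length lam. lam!t div n = i \<and> lam!t mod n \<noteq> 0"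
proof (rule ccontr)
  assume h: "\<not> ?thesis"
  have "n dvd min n (lam!t - i*n)" if "t < length lam" for t
    using minlem[OF assms(1), of "lam!t" i] h that by auto
  then have "n dvd F n lam i" unfolding F_def by (intro dvd_sum) auto
  then show False using assms(2) by simp
qed

definition D :: "nat \<Rightarrow> nat list \<Rightarrow> nat" where
  "D n xs = length (filter (\<lambda>x. x mod n \<noteq> 0) xs)"

lemma D_cn: assumes "n > 0"
  shows "D n (cn n lam) \<le> card ((\<lambda>t. lam!t div n) ` {t. t<length lam \<and> lam!t mod n \<noteq> 0})"
proof -
  let ?M = "Max (insert 0 (set lam))"
  have "D n (cn n lam) = length (filter (\<lambda>x. x mod n \<noteq> 0) (map (F n lam) [0..<?M]))"
    unfolding D_def cn_F filter_filter by (metis (mono_tags, lifting) mod_0)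
  also have "\<dots> = card {i. i < ?M \<and> F n lam i mod n \<noteq> 0}"
    by (simp add: length_filter_conv_card cong: conj_cong)
  also have "\<dots> \<le> card ((\<lambda>t. lam!t div n) ` {t. t<length lam \<and> lam!t mod n \<noteq> 0})"
    apply (rule card_mono)
    using witness[OF assms] by auto
  finally show ?thesis .
qed

lemma D_img: "card ((\<lambda>t. lam!t div n) ` {t. t<length lam \<and> lam!t mod n \<noteq> 0}) \<le> D n lam"
  unfolding D_def length_filter_conv_card by (rule card_image_le) simp

lemma D_img_less:
  assumes "t < length lam" "s < length lam" "t \<noteq> s" "lam!t div n = lam!s div n"
    "lam!t mod n \<noteq> 0" "lam!s mod n \<noteq> 0"
  shows "card ((\<lambda>t. lam!t div n) ` {t. t<length lam \<and> lam!t mod n \<noteq> 0}) < D n lam"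
proof -
  let ?A = "{t. t<length lam \<and> lam!t mod n \<noteq> 0}"
  have "\<not> inj_on (\<lambda>t. lam!t div n) ?A" using assms unfolding inj_on_def by blast
  then have "card ((\<lambda>t. lam!t div n) ` ?A) \<noteq> card ?A" using eq_card_imp_inj_on[of ?A] by auto
  moreover have "card ((\<lambda>t. lam!t div n) ` ?A) \<le> card ?A" by (rule card_image_le) simp
  ultimately show ?thesis unfolding D_def length_filter_conv_card by simp
qed


lemma forward:
  assumes n: "n > 0"
    and dec: "\<And>t s. t \<le> s \<Longrightarrow> s < length lam \<Longrightarrow> lam!s \<le> lam!t"
    and pos: "\<And>t. t < length lam \<Longrightarrow> 0 < lam!t"
    and uniq: "\<And>t s. t < length lam \<Longrightarrow> s < length lam \<Longrightarrow> lam!t div n = lam!s div n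
       \<Longrightarrow> lam!t mod n \<noteq> 0 \<Longrightarrow> lam!s mod n \<noteq> 0 \<Longrightarrow> t = s"
  shows "cn n (cn n lam) = lam"
proof -
  define N where "N = length lam"
  define q where "q t = lam!t div n" for t
  define r where "r t = lam!t mod n" for t
  define a where "a i = card {t. t<N \<and> i < q t}" for i
  define R where "R i = (\<Sum>t<N. if q t = i then r t else 0)" for i
  have Lqr: "lam!t = q t * n + r t" for t unfolding q_def r_def by (metis div_mult_mod_eq)
  have rn: "r t < n" for t unfolding r_def using n by simp
  have uq: "\<And>t s. t < N \<Longrightarrow> s < N \<Longrightarrow> q t = q s \<Longrightarrow> r t \<noteq> 0 \<Longrightarrow> r s \<noteq> 0 \<Longrightarrow> t = s"
    using uniq unfolding N_def q_def r_def by blast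
  have Fdec: "F n lam i = n * a i + R i" for i
  proof -
    have "F n lam i = (\<Sum>t<N. (if i < q t then n else 0) + (if q t = i then r t else 0))"
      unfolding F_def N_def q_def r_def using minlem[OF n] by simp
    also have "\<dots> = (\<Sum>t<N. (if i < q t then n else 0)) + R i"
      unfolding R_def by (simp add: sum.distrib)
    also have "(\<Sum>t<N. (if i < q t then n else 0)) = (\<Sum>t\<in>{t\<in>{..<N}. i < q t}. n)"
      by (rule sum.inter_filter[symmetric]) simp
    also have "{t\<in>{..<N}. i < q t} = {t. t<N \<and> i < q t}" by auto
    also have "(\<Sum>t\<in>{t. t<N \<and> i < q t}. n) = n * a i" unfolding a_def by simp
    finally show ?thesis .
  qed
  have Rw: "R (q t) = r t" if "t < N" "r t \<noteq> 0" for t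
  proof -
    have "R (q t) = (\<Sum>s<N. if s = t then r t else 0)"
      unfolding R_def
    proof (rule sum.cong[OF refl])
      fix s assume "s \<in> {..<N}"
      then show "(if q s = q t then r s else 0) = (if s = t then r t else 0)"
        using uq[of s t] that by auto
    qed
    also have "\<dots> = r t" using that by simp
    finally show ?thesis .
  qed
  have R0: "R i = 0" if "\<not> (\<exists>t<N. q t = i \<and> r t \<noteq> 0)" for i
    unfolding R_def using that by (intro sum.neutral) auto
  have Rlt: "R i < n" for i
  proof (cases "\<exists>t<N. q t = i \<and> r t \<noteq> 0")
    case True
    then obtain t where "t<N" "q t = i" "r t \<noteq> 0" by blast
    then show ?thesis using Rw rn by metis
  next
    case False then show ?thesis using R0 n by simp
  qed
  have Fdiv: "F n lam i div n = a i" for i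
    using Fdec Rlt n by simp
  have Fmod: "F n lam i mod n = R i" for i
    using Fdec Rlt n by simp
  have a_t: "a (q t) = t" if "t < N" "r t \<noteq> 0" for t
  proof -
    have "{s. s<N \<and> q t < q s} = {..<t}"
    proof (intro set_eqI iffI)
      fix s assume s: "s \<in> {s. s<N \<and> q t < q s}"
      show "s \<in> {..<t}"
      proof (rule ccontr)
        assume "s \<notin> {..<t}"
        then have "lam!s \<le> lam!t" using dec s that unfolding N_def by simp
        then have "q s \<le> q t" unfolding q_def by (simp add: div_le_mono)
        then show False using s by simp
      qed
    next
      fix s assume s: "s \<in> {..<t}"
      then have sN: "s < N" using that by simp
      have le: "lam!t \<le> lam!s" using dec s that unfolding N_def by simp
      then have "q t \<le> q s" unfolding q_def by (simp add: div_le_mono)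
      moreover have "q t \<noteq> q s"
      proof
        assume e: "q t = q s"
        then have "r t \<le> r s" using le Lqr[of t] Lqr[of s] by simp
        then have "r s \<noteq> 0" using that by simp
        then show False using uq[OF sN that(1) e[symmetric]] that s by simp
      qed
      ultimately show "s \<in> {s. s<N \<and> q t < q s}" using sN by simp
    qed
    then show ?thesis unfolding a_def by simp
  qed
  have a_iff: "j < a i \<longleftrightarrow> i < q j" if "j < N" for i j
  proof
    assume "i < q j"
    then have "{..j} \<subseteq> {t. t<N \<and> i < q t}"
    proof (intro subsetI)
      fix t assume t: "t \<in> {..j}"
      then have "lam!j \<le> lam!t" using dec that unfolding N_def by simp
      then have "q j \<le> q t" unfolding q_def by (simp add: div_le_mono)
      then show "t \<in> {t. t<N \<and> i < q t}" using t that \<open>i < q j\<close> by simp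
    qed
    then have "card {..j} \<le> a i" unfolding a_def by (intro card_mono) auto
    then show "j < a i" by simp
  next
    assume h: "j < a i"
    show "i < q j"
    proof (rule ccontr)
      assume "\<not> i < q j"
      then have "{t. t<N \<and> i < q t} \<subseteq> {..<j}"
      proof (intro subsetI)
        fix t assume t: "t \<in> {t. t<N \<and> i < q t}"
        show "t \<in> {..<j}"
        proof (rule ccontr)
          assume "t \<notin> {..<j}"
          then have "lam!t \<le> lam!j" using dec t unfolding N_def by simp
          then have "q t \<le> q j" unfolding q_def by (simp add: div_le_mono)
          then show False using t \<open>\<not> i < q j\<close> by simp
        qed
      qed
      then have "a i \<le> j" unfolding a_def using card_mono[of "{..<j}"] by fastforce
      then show False using h by simp
    qed
  qed
  have a_le: "a i \<le> N" for i
    unfolding a_def using card_mono[of "{..<N}" "{t. t<N \<and> i < q t}"] by fastforce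
  define m where "m = (if N = 0 then 0 else (lam!0 + n - 1) div n)"
  have Fnz: "F n lam i \<noteq> 0 \<longleftrightarrow> i < m" for i
  proof -
    have z: "F n lam i = 0 \<longleftrightarrow> (\<forall>t<N. lam!t \<le> i*n)"
    proof -
      have "\<And>x y. min n (x - y) = 0 \<longleftrightarrow> x \<le> (y::nat)" using n by (auto simp: min_def)
      then show ?thesis unfolding F_def N_def by (simp add: lessThan_def)
    qed
    have "F n lam i \<noteq> 0 \<longleftrightarrow> (\<exists>t<N. i*n < lam!t)"
      unfolding z by (simp add: not_le)
    also have "\<dots> \<longleftrightarrow> N \<noteq> 0 \<and> i*n < lam!0"
    proof
      assume "\<exists>t<N. i*n < lam!t"
      then obtain t where t: "t < N" "i*n < lam!t" by blast
      have "lam!t \<le> lam!0" using dec[of 0 t] t unfolding N_def by simp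
      then show "N \<noteq> 0 \<and> i*n < lam!0" using t by simp
    next
      assume "N \<noteq> 0 \<and> i*n < lam!0"
      then show "\<exists>t<N. i*n < lam!t" by blast
    qed
    also have "\<dots> \<longleftrightarrow> i < m"
    proof (cases "N = 0")
      case True then show ?thesis unfolding m_def by simp
    next
      case False then show ?thesis unfolding m_def using ceil_iff[OF n, of i "lam!0"] by simp
    qed
    finally show ?thesis .
  qed
  have mu: "cn n lam = map (F n lam) [0..<m]"
  proof (rule cn_eq[OF n])
    show "\<forall>j<m. F n lam j \<noteq> 0" using Fnz by blast
    show "\<forall>j\<ge>m. F n lam j = 0" using Fnz by (meson not_le)
  qed
  have qm: "q j \<le> m" if "j < N" for j
  proof (cases "q j")
    case 0 then show ?thesis by simp
  next
    case (Suc p)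
    have "p*n < q j * n" using Suc n by simp
    also have "\<dots> \<le> lam!j" using Lqr[of j] by simp
    also have "\<dots> \<le> lam!0" using dec that unfolding N_def by simp
    finally have "p < m" unfolding m_def using that ceil_iff[OF n] by auto
    then show ?thesis using Suc by simp
  qed
  have qm2: "q j < m" if "j < N" "r j \<noteq> 0" for j
  proof -
    have "q j * n < lam!j" using Lqr[of j] that by simp
    also have "\<dots> \<le> lam!0" using dec that unfolding N_def by simp
    finally show ?thesis unfolding m_def using that ceil_iff[OF n] by auto
  qed
  define G where "G j = (\<Sum>i<m. min n (F n lam i - j*n))" for j
  have FG: "F n (cn n lam) j = G j" for j
    unfolding G_def mu F_def by simp
  have G1: "G j = (\<Sum>i<m. (if j < a i then n else 0) + (if a i = j then R i else 0))" for j
    unfolding G_def by (simp only: minlem[OF n] Fdiv Fmod)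
  have Glam: "G j = lam!j" if "j < N" for j
  proof -
    have pt: "(if a i = j then R i else 0) = (if i = q j then r j else 0)" if "q j \<le> i" for i
    proof (cases "\<exists>t<N. q t = i \<and> r t \<noteq> 0")
      case True
      then obtain t where t: "t<N" "q t = i" "r t \<noteq> 0" by blast
      show ?thesis
      proof (cases "j = t")
        case True
        have "a i = j" using a_t[OF t(1) t(3)] t(2) True by simp
        moreover have "R i = r j" using Rw[OF t(1) t(3)] t(2) True by simp
        moreover have "i = q j" using t(2) True by simp
        ultimately show ?thesis by simp
      next
        case False
        have "a i = t" using a_t[OF t(1) t(3)] t(2) by simp
        moreover have "i = q j \<longrightarrow> r j = 0"
        proof (rule impI, rule ccontr)
          assume "i = q j" "r j \<noteq> 0"
          then have "j = t" using uq[OF \<open>j<N\<close> t(1)] t by simp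
          then show False using False by simp
        qed
        ultimately show ?thesis using False by simp
      qed
    next
      case False
      then show ?thesis using R0[OF False] \<open>j<N\<close> by auto
    qed
    have "G j = (\<Sum>i<m. (if i < q j then n else 0) + (if i = q j then r j else 0))"
      unfolding G1
    proof (rule sum.cong[OF refl])
      fix i assume "i \<in> {..<m}"
      show "(if j < a i then n else 0) + (if a i = j then R i else 0) =
            (if i < q j then n else 0) + (if i = q j then r j else 0)"
      proof (cases "i < q j")
        case True then show ?thesis using a_iff[OF \<open>j<N\<close>, of i] by auto
      next
        case False then show ?thesis using a_iff[OF \<open>j<N\<close>, of i] pt[of i] by auto
      qed
    qed
    also have "\<dots> = (\<Sum>i<m. (if i < q j then n else 0)) + (\<Sum>i<m. (if i = q j then r j else 0))"
      by (simp add: sum.distrib)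
    also have "(\<Sum>i<m. (if i < q j then n else 0)) = (\<Sum>i\<in>{i\<in>{..<m}. i < q j}. n)"
      by (rule sum.inter_filter[symmetric]) simp
    also have "{i\<in>{..<m}. i < q j} = {..<q j}" using qm[OF \<open>j<N\<close>] by auto
    also have "(\<Sum>i<m. (if i = q j then r j else 0)) = r j"
      using qm2[OF \<open>j<N\<close>] by (cases "r j = 0") auto
    finally show ?thesis using Lqr[of j] by (simp add: mult.commute)
  qed
  have Gz: "G j = 0" if "N \<le> j" for j
    unfolding G1
  proof (rule sum.neutral, rule ballI)
    fix i assume "i \<in> {..<m}"
    have "\<not> j < a i" using a_le[of i] that by simp
    moreover have "R i = 0" if "a i = j"
    proof (rule ccontr)
      assume Ri: "R i \<noteq> 0"
      have "\<exists>t<N. q t = i \<and> r t \<noteq> 0"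
        by (rule ccontr) (use R0[of i] Ri in simp)
      then obtain t where t: "t<N" "q t = i" "r t \<noteq> 0" by blast
      then have "a i = t" using a_t[OF t(1) t(3)] by simp
      then show False using t \<open>N \<le> j\<close> \<open>a i = j\<close> by simp
    qed
    ultimately show "(if j < a i then n else 0) + (if a i = j then R i else 0) = 0" by auto
  qed
  have "cn n (cn n lam) = map (F n (cn n lam)) [0..<N]"
    by (rule cn_eq[OF n]) (use FG Glam Gz pos N_def in auto)
  also have "\<dots> = lam" unfolding FG N_def
    by (rule nth_equalityI) (simp_all add: Glam N_def)
  finally show ?thesis .
qed


theorem mainTheorem2:
  fixes n :: nat and lam :: "nat list"
  assumes "n > 0" and "is_partition lam"
  shows "cn n (cn n lam) = lam \<longleftrightarrow>
    (\<forall>k::nat. card {i. i < length lam \<and> k * n < lam ! i \<and> lam ! i < (k + 1) * n} \<le> 1)"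
proof -
  have n: "n > 0" by fact
  have sw: "sorted_wrt (\<ge>) lam" and z: "0 \<notin> set lam" using assms(2) unfolding is_partition_def by auto
  have dec: "lam!s \<le> lam!t" if "t \<le> s" "s < length lam" for t s
  proof (cases "t = s")
    case True then show ?thesis by simp
  next
    case False then show ?thesis using sorted_wrt_nth_less[OF sw, of t s] that by simp
  qed
  have pos: "0 < lam!t" if "t < length lam" for t
    using z nth_mem[OF that] by (metis gr0I)
  let ?S = "\<lambda>k. {i. i < length lam \<and> k * n < lam ! i \<and> lam ! i < (k + 1) * n}"
  have S_eq: "?S k = {i. i < length lam \<and> lam!i div n = k \<and> lam!i mod n \<noteq> 0}" for k
    using interval_iff[OF n] by blast
  have C_iff: "(\<forall>k. card (?S k) \<le> 1) \<longleftrightarrow>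
     (\<forall>t s. t < length lam \<longrightarrow> s < length lam \<longrightarrow> lam!t div n = lam!s div n
       \<longrightarrow> lam!t mod n \<noteq> 0 \<longrightarrow> lam!s mod n \<noteq> 0 \<longrightarrow> t = s)"
  proof -
    have "card (?S k) \<le> 1 \<longleftrightarrow> (\<forall>a1\<in>?S k. \<forall>a2\<in>?S k. a1 = a2)" for k
      using card_le_Suc0_iff_eq[of "?S k"] by simp
    then show ?thesis unfolding S_eq by auto
  qed
  show ?thesis
  proof
    assume eq: "cn n (cn n lam) = lam"
    show "\<forall>k. card (?S k) \<le> 1"
    proof (rule ccontr)
      assume "\<not> (\<forall>k. card (?S k) \<le> 1)"
      then obtain t s where ts: "t < length lam" "s < length lam" "lam!t div n = lam!s div n"
        "lam!t mod n \<noteq> 0" "lam!s mod n \<noteq> 0" "t \<noteq> s"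
        unfolding C_iff by blast
      have "D n (cn n (cn n lam)) \<le> D n (cn n lam)"
        using D_cn[OF n, of "cn n lam"] D_img[where n=n and lam="cn n lam"] by linarith
      also have "\<dots> < D n lam"
        using D_cn[OF n, of lam] D_img_less[OF ts(1,2,6,3,4,5)] by linarith
      finally show False using eq by simp
    qed
  next
    assume "\<forall>k. card (?S k) \<le> 1"
    then have u: "\<And>t s. t < length lam \<Longrightarrow> s < length lam \<Longrightarrow> lam!t div n = lam!s div n
       \<Longrightarrow> lam!t mod n \<noteq> 0 \<Longrightarrow> lam!s mod n \<noteq> 0 \<Longrightarrow> t = s"
      unfolding C_iff by blast
    show "cn n (cn n lam) = lam" by (rule forward[OF n dec pos u])
  qed
qed

end
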